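(* Let $A>0$, $B>0$ and $0<v_{\mathrm{nozzle}}<1$. There exist $w>0$, $t_{\mathrm{end}}>0$ and $v\in C^1([0,t_{\mathrm{end}}])$ solving $$v'(t)=-v(t)^2\Big(\sqrt{A^2t^2+w}+v(t)\Big),\quad v(0)=1,\quad v(t_{\mathrm{end}})=v_{\mathrm{nozzle}},\quad \int_0^{t_{\mathrm{end}}}\frac{At\,v(t)}{\sqrt{A^2t^2+w}}\,dt=B$$ (equivalently, a curved-jet solution of the dimensionless model: $v(s),\Theta(s)$ on $[0,s_{\mathrm{end}}]$ with $(v+v'/v)'=-A\sin\Theta/v$, $\Theta'=-A\cos\Theta/(v(v+v'/v))$, $v(0)=1$, $v(s_{\mathrm{end}})=v_{\mathrm{nozzle}}$, $\Theta(0)=0$, $\int_0^{s_{\mathrm{end}}}\sin\Theta\,ds=B$, with $v+v'/v<0$, obtained via $ds=v\,dt$, $\sin\Theta=At/\sqrt{A^2t^2+w}$) if and only if $$I(0;A,v_{\mathrm{nozzle}})>B.$$ If such a solution exists, it is unique.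
   Context: For $A>0$ and $w\ge0$, $v(\cdot;w):[0,\infty)\to(0,1]$ denotes the unique solution of $v'=-v^2(\sqrt{A^2t^2+w}+v)$, $v(0)=1$; it is strictly decreasing in $t$ and tends to $0$ as $t\to\infty$. For $0<v_{\mathrm{nozzle}}<1$, $t_{\mathrm{end}}(w)>0$ is the unique time with $v(t_{\mathrm{end}}(w);w)=v_{\mathrm{nozzle}}$, and $$I(w)=I(w;A,v_{\mathrm{nozzle}})=\int_0^{t_{\mathrm{end}}(w)}\frac{At\,v(t;w)}{\sqrt{A^2t^2+w}}\,dt.$$ In particular $I(0;A,v_{\mathrm{nozzle}})=\int_0^{t_{\mathrm{end}}(0)}v(t;0)\,dt$. Here $A=g\mu/v_{\mathrm{belt}}^3$, $B=v_{\mathrm{belt}}L/\mu$, and $v_{\mathrm{nozzle}}$ is the ratio of nozzle velocity to belt velocity. *)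

theory Defs
  imports "HOL-Analysis.Analysis"
begin

definition jet_rhs :: "real \<Rightarrow> real \<Rightarrow> real \<Rightarrow> real \<Rightarrow> real" where
  "jet_rhs A w t x = - (x^2) * (sqrt (A^2 * t^2 + w) + x)"

text \<open>The global solution v(.;w) on [0,oo) with v(0)=1; for t<0 it is extended
  by the constant 1 (an arbitrary normalisation making THE well defined).\<close>
definition v_sol :: "real \<Rightarrow> real \<Rightarrow> real \<Rightarrow> real" where
  "v_sol A w = (THE f. f 0 = 1 \<and>
      (\<forall>t\<ge>0. (f has_real_derivative jet_rhs A w t (f t)) (at t within {0..})) \<and>
      (\<forall>t<0. f t = 1))"

definition t_end :: "real \<Rightarrow> real \<Rightarrow> real \<Rightarrow> real" where
  "t_end A vn w = (THE t. t \<ge> 0 \<and> v_sol A w t = vn)"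

definition I_fun :: "real \<Rightarrow> real \<Rightarrow> real \<Rightarrow> real" where
  "I_fun A vn w = integral {0..t_end A vn w}
      (\<lambda>t. A * t * v_sol A w t / sqrt (A^2 * t^2 + w))"

definition jet_solution :: "real \<Rightarrow> real \<Rightarrow> real \<Rightarrow> real \<Rightarrow> real \<Rightarrow> (real \<Rightarrow> real) \<Rightarrow> bool" where
  "jet_solution A B vn w te v \<longleftrightarrow>
     w > 0 \<and> te > 0 \<and>
     (\<exists>v'. continuous_on {0..te} v' \<and>
        (\<forall>t\<in>{0..te}. (v has_real_derivative v' t) (at t within {0..te}) \<and>
                       v' t = jet_rhs A w t (v t))) \<and>
     v 0 = 1 \<and> v te = vn \<and>
     integral {0..te} (\<lambda>t. A * t * v t / sqrt (A^2 * t^2 + w)) = B"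

end

theory Submission
  imports Defs
begin


lemma deriv_nonneg_mono:
  fixes f :: "real \<Rightarrow> real"
  assumes ab: "a \<le> b"
    and d: "\<And>t. t \<in> {a..b} \<Longrightarrow> (f has_real_derivative f' t) (at t within {a..b})"
    and nn: "\<And>t. t \<in> {a..b} \<Longrightarrow> 0 \<le> f' t"
  shows "f a \<le> f b"
proof -
  have cont: "continuous_on {a..b} f" using d by (rule DERIV_continuous_on)
  show ?thesis
  proof (rule DERIV_nonneg_imp_increasing_open[OF ab _ cont])
    fix x assume x: "a < x" "x < b"
    then have "(f has_real_derivative f' x) (at x)" using d[of x] at_within_Icc_at by fastforce
    then show "\<exists>y. DERIV f x :> y \<and> 0 \<le> y" using nn[of x] x by auto
  qed
qed

lemma deriv_nonneg_mono':
  fixes f :: "real \<Rightarrow> real"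
  assumes d: "\<And>t. t \<in> {a..b} \<Longrightarrow> (f has_real_derivative f' t) (at t within {a..b})"
    and nn: "\<And>t. t \<in> {a..b} \<Longrightarrow> 0 \<le> f' t"
    and xy: "a \<le> x" "x \<le> y" "y \<le> b"
  shows "f x \<le> f y"
proof (rule deriv_nonneg_mono[OF xy(2)])
  fix t assume t: "t \<in> {x..y}"
  then have "t \<in> {a..b}" using xy by auto
  then show "(f has_real_derivative f' t) (at t within {x..y})"
    using d has_field_derivative_subset[of f "f' t" t "{a..b}" "{x..y}"] xy by auto
  show "0 \<le> f' t" using nn \<open>t \<in> {a..b}\<close> by auto
qed

lemma deriv_Ici_to_Icc:
  assumes "(f has_real_derivative D) (at t within {a..})"
  shows "(f has_real_derivative D) (at t within {a..b})"
  using assms has_field_derivative_subset by fastforce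

lemma deriv_Icc_to_Ici:
  assumes "(f has_real_derivative D) (at t within {a..b})" "t < b"
  shows "(f has_real_derivative D) (at t within {a..})"
proof -
  have "at t within {a..b} = at t within {a..}"
    by (rule at_within_nhd[of _ "{..<b}"]) (use assms(2) in auto)
  then show ?thesis using assms(1) by simp
qed



lemma inv_max1_lip: "\<bar>1 / max (a::real) 1 - 1 / max b 1\<bar> \<le> \<bar>a - b\<bar>"
proof -
  have m1: "max a 1 \<ge> 1" "max b 1 \<ge> 1" by auto
  have "1 / max a 1 - 1 / max b 1 = (max b 1 - max a 1) / (max a 1 * max b 1)"
    using m1 by (simp add: field_simps)
  then have "\<bar>1 / max a 1 - 1 / max b 1\<bar> = \<bar>max b 1 - max a 1\<bar> / (max a 1 * max b 1)"
    using m1 by (simp add: abs_div)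
  also have "\<dots> \<le> \<bar>max b 1 - max a 1\<bar>"
  proof -
    have "1 \<le> max a 1 * max b 1" using m1 by (metis mult_mono' mult_1_right zero_le_one)
    then show ?thesis by (simp add: divide_le_eq mult_le_cancel_left1 mult_left_le)
  qed
  also have "\<dots> \<le> \<bar>a - b\<bar>" by auto
  finally show ?thesis .
qed

lemma exp_integral: "(x::real) \<ge> 0 \<Longrightarrow> integral {0..x} (\<lambda>\<tau>. exp (2 * \<tau>)) = (exp (2 * x) - 1) / 2"
proof -
  assume x: "x \<ge> 0"
  have d: "((\<lambda>\<tau>. exp (2 * \<tau>) / 2) has_real_derivative exp (2 * t)) (at t within S)" for t S
    by (auto intro!: derivative_eq_intros)
  have "((\<lambda>\<tau>. exp (2 * \<tau>)) has_integral (exp (2 * x) / 2 - exp (2 * 0) / 2)) {0..x}"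
    by (rule fundamental_theorem_of_calculus[of 0 x "\<lambda>\<tau>. exp (2 * \<tau>) / 2", OF x])
       (use d in \<open>simp add: has_real_derivative_iff_has_vector_derivative\<close>)
  then show ?thesis by (simp add: integral_unique diff_divide_distrib)
qed

lemma exists_U:
  fixes A w :: real
  assumes A: "A > 0" and w: "w \<ge> 0"
  shows "\<exists>u. u 0 = 1 \<and> (\<forall>t\<ge>0. 1 \<le> u t \<and>
            (u has_real_derivative (sqrt (A^2 * t^2 + w) + 1 / u t)) (at t within {0..}))"
proof -
  define c where "c \<tau> = sqrt (A^2 * \<tau>^2 + w)" for \<tau>
  define h where "h y \<tau> = c \<tau> + 1 / max (exp (2 * \<tau>) * apply_bcontfun y \<tau>) 1"
    for y :: "real \<Rightarrow>\<^sub>C real" and \<tau>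
  define G where "G y x = integral {0..x} (h y)" for y x
  define P where "P y t = exp (- 2 * max t 0) * (1 + G y (max t 0))" for y t
  have ccont: "continuous_on S c" for S unfolding c_def by (intro continuous_intros)
  have hcont: "continuous_on S (h y)" for y S
    unfolding h_def by (intro continuous_intros ccont) auto
  have hnn: "0 \<le> h y \<tau>" for y \<tau> unfolding h_def c_def using w by (intro add_nonneg_nonneg) auto
  have hle: "h y \<tau> \<le> A * x + sqrt w + 1" if "\<tau> \<in> {0..x}" for y \<tau> x
  proof -
    have "c \<tau> \<le> sqrt (A^2 * \<tau>^2) + sqrt w" unfolding c_def
      by (rule sqrt_add_le_add_sqrt) (use w in simp_all)
    also have "sqrt (A^2 * \<tau>^2) = A * \<tau>" using A that by (simp add: real_sqrt_mult)
    also have "A * \<tau> \<le> A * x" using A that by auto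
    finally have "c \<tau> \<le> A * x + sqrt w" by simp
    moreover have "1 / max (exp (2 * \<tau>) * apply_bcontfun y \<tau>) 1 \<le> 1" by auto
    ultimately show ?thesis unfolding h_def by linarith
  qed
  have hint: "h y integrable_on {a..b}" for y a b
    by (rule integrable_continuous_interval[OF hcont])
  have Gnn: "0 \<le> G y x" for y x
    unfolding G_def by (rule integral_nonneg[OF hint]) (simp add: hnn)
  have Gle: "G y x \<le> x * (A * x + sqrt w + 1)" if "x \<ge> 0" for y x
  proof -
    have "G y x \<le> integral {0..x} (\<lambda>_. A * x + sqrt w + 1)"
      unfolding G_def by (rule integral_le[OF hint]) (auto intro: hle)
    also have "\<dots> = x * (A * x + sqrt w + 1)" using that by simp
    finally show ?thesis .
  qed
  define K where "K = A + sqrt w + 2"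
  have Pcont: "continuous_on UNIV (P y)" for y
  proof -
    have "isCont (P y) t" for t
    proof -
      define b where "b = \<bar>t\<bar> + 1"
      have "continuous_on {0..b} (G y)" unfolding G_def
        by (rule indefinite_integral_continuous_1[OF hint])
      then have "continuous_on {-b<..<b} (\<lambda>t. G y (max t 0))"
        by (rule continuous_on_compose2[where f="\<lambda>t. max t 0"]) (auto intro!: continuous_intros)
      then have "continuous_on {-b<..<b} (P y)" unfolding P_def by (intro continuous_intros)
      then show ?thesis by (rule continuous_on_interior) (auto simp: b_def)
    qed
    then show ?thesis by (simp add: continuous_at_imp_continuous_on)
  qed
  have Pbound: "norm (P y t) \<le> K" for y t
  proof -
    define x where "x = max t 0"
    have x0: "x \<ge> 0" by (simp add: x_def)
    have "1 + G y x \<le> 1 + x * (A * x + sqrt w + 1)" using Gle[OF x0] by simp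
    also have "\<dots> \<le> K * (1 + x)^2"
    proof -
      have f: "0 \<le> sqrt w" "0 \<le> x * sqrt w" "0 \<le> x * x * sqrt w" "0 \<le> A * x" "0 \<le> x * x"
        "0 \<le> A * x * x" "0 \<le> A" using x0 A w by auto
      show ?thesis unfolding K_def power2_eq_square using f x0 by (simp add: algebra_simps)
    qed
    also have "K * (1 + x)^2 \<le> K * exp (2 * x)"
    proof (rule mult_left_mono)
      have "(1 + x)^2 \<le> exp x ^ 2" using x0
        by (intro power_mono) (auto simp: add.commute exp_ge_add_one_self)
      also have "exp x ^ 2 = exp (2 * x)" by (simp add: power2_eq_square mult_exp_exp)
      finally show "(1 + x)^2 \<le> exp (2 * x)" .
      show "0 \<le> K" using A w by (simp add: K_def)
    qed
    finally have *: "1 + G y x \<le> K * exp (2 * x)" .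
    have "norm (P y t) = exp (- 2 * x) * (1 + G y x)"
      using Gnn[of y x] by (simp add: P_def x_def)
    also have "\<dots> \<le> exp (- 2 * x) * (K * exp (2 * x))" using * by simp
    also have "\<dots> = K" by (simp add: mult_exp_exp)
    finally show ?thesis .
  qed
  have Pin: "P y \<in> bcontfun" for y by (rule bcontfun_normI[OF Pcont Pbound])
  define \<Phi> where "\<Phi> y = Bcontfun (P y)" for y
  have \<Phi>_apply: "apply_bcontfun (\<Phi> y) t = P y t" for y t
    using Pin by (simp add: \<Phi>_def Bcontfun_inverse)
  have contr: "dist (\<Phi> y) (\<Phi> z) \<le> 1/2 * dist y z" for y z
  proof (rule dist_bound)
    fix t :: real
    define x where "x = max t 0"
    have x0: "x \<ge> 0" unfolding x_def by (rule max.cobounded2)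
    define D where "D = dist y z"
    have "norm (integral {0..x} (\<lambda>\<tau>. h y \<tau> - h z \<tau>)) \<le> integral {0..x} (\<lambda>\<tau>. exp (2 * \<tau>) * D)"
    proof (rule integral_norm_bound_integral)
      show "(\<lambda>\<tau>. h y \<tau> - h z \<tau>) integrable_on {0..x}"
        by (intro integrable_diff hint)
      show "(\<lambda>\<tau>. exp (2 * \<tau>) * D) integrable_on {0..x}"
        by (intro integrable_continuous_interval continuous_intros)
      fix \<tau> assume "\<tau> \<in> {0..x}"
      have "norm (h y \<tau> - h z \<tau>) = \<bar>1 / max (exp (2 * \<tau>) * apply_bcontfun y \<tau>) 1 - 1 / max (exp (2 * \<tau>) * apply_bcontfun z \<tau>) 1\<bar>"
        by (simp add: h_def)
      also have "\<dots> \<le> \<bar>exp (2 * \<tau>) * apply_bcontfun y \<tau> - exp (2 * \<tau>) * apply_bcontfun z \<tau>\<bar>"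
        by (rule inv_max1_lip)
      also have "\<dots> = exp (2 * \<tau>) * dist (apply_bcontfun y \<tau>) (apply_bcontfun z \<tau>)"
        by (simp add: dist_real_def abs_mult right_diff_distrib[symmetric])
      also have "\<dots> \<le> exp (2 * \<tau>) * D" unfolding D_def
        by (intro mult_left_mono dist_bounded) auto
      finally show "norm (h y \<tau> - h z \<tau>) \<le> exp (2 * \<tau>) * D" .
    qed
    also have "\<dots> = (exp (2 * x) - 1) / 2 * D" using exp_integral[OF x0] by simp
    finally have I: "\<bar>G y x - G z x\<bar> \<le> (exp (2 * x) - 1) / 2 * D"
      unfolding G_def by (simp add: integral_diff[OF hint hint])
    have "dist (apply_bcontfun (\<Phi> y) t) (apply_bcontfun (\<Phi> z) t) = exp (- 2 * x) * \<bar>G y x - G z x\<bar>"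
      by (simp add: \<Phi>_apply P_def x_def dist_real_def abs_mult right_diff_distrib[symmetric])
    also have "\<dots> \<le> exp (- 2 * x) * ((exp (2 * x) - 1) / 2 * D)"
      using I by (intro mult_left_mono) auto
    also have "\<dots> = (1 - exp (- 2 * x)) / 2 * D"
      by (simp add: field_simps mult_exp_exp)
    also have "\<dots> \<le> 1/2 * D"
      by (intro mult_right_mono) (auto simp: D_def)
    finally show "dist (apply_bcontfun (\<Phi> y) t) (apply_bcontfun (\<Phi> z) t) \<le> 1/2 * dist y z"
      by (simp add: D_def)
  qed
  obtain y where fixp: "\<Phi> y = y"
    using banach_fix_type[of "1/2" \<Phi>] contr by auto
  define u where "u t = exp (2 * t) * apply_bcontfun y t" for t
  have u_eq: "u t = 1 + G y t" if "t \<ge> 0" for t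
  proof -
    have "apply_bcontfun y t = P y t" using fixp \<Phi>_apply by metis
    then show ?thesis using that by (simp add: u_def P_def mult_exp_exp)
  qed
  have u1: "1 \<le> u t" if "t \<ge> 0" for t using u_eq[OF that] Gnn[of y t] by simp
  have h_eq: "h y t = c t + 1 / u t" if "t \<ge> 0" for t
    using u1[OF that] by (simp add: h_def u_def)
  show ?thesis
  proof (intro exI conjI allI impI)
    show "u 0 = 1" using u_eq[of 0] by (simp add: G_def)
    fix t :: real assume t: "t \<ge> 0"
    show "1 \<le> u t" by (rule u1[OF t])
    have "(G y has_real_derivative h y t) (at t within {0..t+1})"
      unfolding G_def by (rule integral_has_real_derivative[OF hcont]) (use t in auto)
    then have "(G y has_real_derivative h y t) (at t within {0..})"
      by (rule deriv_Icc_to_Ici) simp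
    then have "((\<lambda>t. 1 + G y t) has_real_derivative h y t) (at t within {0..})"
      by (auto intro!: derivative_eq_intros)
    then have "(u has_real_derivative h y t) (at t within {0..})"
      by (rule has_field_derivative_transform_within[where d=1]) (use t u_eq in auto)
    then show "(u has_real_derivative sqrt (A^2 * t^2 + w) + 1 / u t) (at t within {0..})"
      using h_eq[OF t] by (simp add: c_def)
  qed
qed



lemma deriv_pos_strict:
  fixes f :: "real \<Rightarrow> real"
  assumes ab: "a < b"
    and d: "\<And>t. t \<in> {a..b} \<Longrightarrow> (f has_real_derivative f' t) (at t within {a..b})"
    and pos: "\<And>t. t \<in> {a..b} \<Longrightarrow> 0 < f' t"
  shows "f a < f b"
proof -
  have cont: "continuous_on {a..b} f" using d by (rule DERIV_continuous_on)
  show ?thesis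
  proof (rule DERIV_pos_imp_increasing_open[OF ab _ cont])
    fix x assume x: "a < x" "x < b"
    then have "(f has_real_derivative f' x) (at x)" using d[of x] at_within_Icc_at by fastforce
    then show "\<exists>y. DERIV f x :> y \<and> 0 < y" using pos[of x] x by auto
  qed
qed

lemma exp_lin_deriv: "((\<lambda>t. exp (c * t)) has_real_derivative exp (c * t) * c) (at t within S)"
  by (auto intro!: derivative_eq_intros)

lemma jet_rhs_diff:
  "jet_rhs A w t x - jet_rhs A w t y =
     - (x - y) * ((x + y) * sqrt (A^2 * t^2 + w) + (x^2 + x * y + y^2))"
  by (simp add: jet_rhs_def algebra_simps power2_eq_square power3_eq_cube)

lemma ode_unique:
  fixes f g :: "real \<Rightarrow> real" and A w T :: real
  assumes T: "0 \<le> T" and w: "0 \<le> w"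
    and df: "\<And>t. t \<in> {0..T} \<Longrightarrow> (f has_real_derivative jet_rhs A w t (f t)) (at t within {0..T})"
    and dg: "\<And>t. t \<in> {0..T} \<Longrightarrow> (g has_real_derivative jet_rhs A w t (g t)) (at t within {0..T})"
    and f0: "f 0 = g 0"
  shows "\<forall>t\<in>{0..T}. f t = g t"
proof -
  have cf: "continuous_on {0..T} f" using df by (rule DERIV_continuous_on)
  have cg: "continuous_on {0..T} g" using dg by (rule DERIV_continuous_on)
  obtain Mf where Mf: "\<And>t. t \<in> {0..T} \<Longrightarrow> norm (f t) \<le> Mf"
    using continuous_on_compact_bound[OF compact_Icc cf] by blast
  obtain Mg where Mg: "\<And>t. t \<in> {0..T} \<Longrightarrow> norm (g t) \<le> Mg"
    using continuous_on_compact_bound[OF compact_Icc cg] by blast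
  define S where "S = sqrt (A^2 * T^2 + w)"
  define K where "K = (Mf + Mg) * S"
  have sS: "0 \<le> sqrt (A^2 * t^2 + w) \<and> sqrt (A^2 * t^2 + w) \<le> S" if "t \<in> {0..T}" for t
  proof -
    have "t^2 \<le> T^2" using that by (intro power_mono) auto
    then have "A^2 * t^2 \<le> A^2 * T^2" by (intro mult_left_mono) auto
    then show ?thesis unfolding S_def using w by auto
  qed
  define \<phi> where "\<phi> t = exp (- 2 * K * t) * (f t - g t)^2" for t
  define \<phi>' where "\<phi>' t = exp (- 2 * K * t) * (- 2 * K * (f t - g t)^2
      + 2 * (f t - g t) * (jet_rhs A w t (f t) - jet_rhs A w t (g t)))" for t
  have dphi: "(\<phi> has_real_derivative \<phi>' t) (at t within {0..T})" if "t \<in> {0..T}" for t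
  proof -
    have d1: "((\<lambda>t. f t - g t) has_real_derivative (jet_rhs A w t (f t) - jet_rhs A w t (g t))) (at t within {0..T})"
      by (rule DERIV_diff[OF df[OF that] dg[OF that]])
    have d2: "((\<lambda>t. (f t - g t) * (f t - g t)) has_real_derivative
        (jet_rhs A w t (f t) - jet_rhs A w t (g t)) * (f t - g t) + (jet_rhs A w t (f t) - jet_rhs A w t (g t)) * (f t - g t)) (at t within {0..T})"
      by (rule DERIV_mult[OF d1 d1])
    have d3: "((\<lambda>t. exp (- 2 * K * t)) has_real_derivative exp (- 2 * K * t) * (- 2 * K)) (at t within {0..T})"
      by (rule exp_lin_deriv)
    note d4 = DERIV_mult[OF d3 d2]
    show ?thesis unfolding \<phi>_def \<phi>'_def power2_eq_square
      by (rule DERIV_cong[OF d4]) (simp add: algebra_simps)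
  qed
  have nonpos: "\<phi>' t \<le> 0" if t: "t \<in> {0..T}" for t
  proof -
    define d where "d = f t - g t"
    define s where "s = sqrt (A^2 * t^2 + w)"
    have "(f t)^2 + f t * g t + (g t)^2 = (f t + g t / 2)^2 + 3/4 * (g t)^2"
      by (simp add: power2_eq_square algebra_simps)
    then have q: "0 \<le> (f t)^2 + f t * g t + (g t)^2" by simp
    have "- (f t + g t) * s \<le> \<bar>f t + g t\<bar> * s" using sS[OF t] by (intro mult_right_mono) (auto simp: s_def)
    also have "\<dots> \<le> (Mf + Mg) * S"
      using sS[OF t] Mf[OF t] Mg[OF t] by (intro mult_mono) (auto simp: s_def)
    finally have h: "- (f t + g t) * s \<le> K" unfolding K_def .
    have "- ((f t + g t) * s) = - (f t + g t) * s" by (simp add: algebra_simps)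
    then have "- ((f t + g t) * s + ((f t)^2 + f t * g t + (g t)^2)) \<le> K"
      using q h by linarith
    then have "- (d^2 * ((f t + g t) * s + ((f t)^2 + f t * g t + (g t)^2))) \<le> d^2 * K"
      by (metis mult_left_mono mult_minus_right zero_le_power2)
    then have "2 * d * (jet_rhs A w t (f t) - jet_rhs A w t (g t)) \<le> 2 * K * d^2"
      unfolding jet_rhs_diff d_def s_def by (simp add: power2_eq_square algebra_simps)
    then show ?thesis unfolding \<phi>'_def d_def
      by (simp add: mult_nonpos_nonneg mult_le_0_iff)
  qed
  show ?thesis
  proof
    fix t assume t: "t \<in> {0..T}"
    have "(\<lambda>t. - \<phi> t) 0 \<le> (\<lambda>t. - \<phi> t) t"
    proof (rule deriv_nonneg_mono'[where f="\<lambda>t. - \<phi> t" and f'="\<lambda>t. - \<phi>' t" and a=0 and b=T])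
      fix x assume x: "x \<in> {0..T}"
      show "((\<lambda>t. - \<phi> t) has_real_derivative - \<phi>' x) (at x within {0..T})"
        by (rule DERIV_minus[OF dphi[OF x]])
      show "0 \<le> - \<phi>' x" using nonpos[OF x] by simp
    qed (use t in auto)
    then have "\<phi> t \<le> 0" using f0 by (simp add: \<phi>_def)
    then have "(f t - g t)^2 \<le> 0" unfolding \<phi>_def by (simp add: mult_le_0_iff)
    then show "f t = g t" by simp
  qed
qed

lemma sqrt_shift_le:
  fixes a w1 w2 :: real
  assumes "0 \<le> a" "0 \<le> w1" "w1 \<le> w2"
  shows "sqrt (a + w2) - sqrt (a + w1) \<le> sqrt w2 - sqrt w1"
proof -
  define R where "R = sqrt (a + w1) + (sqrt w2 - sqrt w1)"
  have m: "sqrt w1 \<le> sqrt w2" "sqrt w1 \<le> sqrt (a + w1)" using assms by auto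
  have R0: "0 \<le> R" unfolding R_def using m assms by auto
  have "R^2 = (a + w1) + (sqrt w2 - sqrt w1)^2 + 2 * sqrt (a + w1) * (sqrt w2 - sqrt w1)"
    unfolding R_def using assms by (simp add: power2_eq_square algebra_simps)
  also have "\<dots> \<ge> (a + w1) + (sqrt w2 - sqrt w1)^2 + 2 * sqrt w1 * (sqrt w2 - sqrt w1)"
    using m by (intro add_left_mono mult_right_mono) auto
  finally have f1: "(a + w1) + (sqrt w2 - sqrt w1)^2 + 2 * sqrt w1 * (sqrt w2 - sqrt w1) \<le> R^2" .
  have e: "(sqrt w2 - sqrt w1)^2 + 2 * sqrt w1 * (sqrt w2 - sqrt w1) = (sqrt w2)^2 - (sqrt w1)^2"
    by (simp add: power2_eq_square algebra_simps)
  have "(sqrt w2)^2 = w2" "(sqrt w1)^2 = w1" using assms by auto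
  then have "a + w2 \<le> R^2" using f1 e by linarith
  then have "sqrt (a + w2) \<le> R" using R0 real_le_lsqrt real_sqrt_le_iff
    by (metis real_sqrt_abs abs_of_nonneg)
  then show ?thesis unfolding R_def by simp
qed

lemma sqrt_gap_strict:
  fixes a w1 w2 :: real
  assumes "0 < a" "0 \<le> w1" "w1 < w2"
  shows "sqrt (a + w2) - sqrt w2 < sqrt (a + w1) - sqrt w1"
proof -
  have id: "sqrt (a + w) - sqrt w = a / (sqrt (a + w) + sqrt w)" if "0 \<le> w" for w
  proof -
    have pos: "0 < sqrt (a + w) + sqrt w" using assms that
      by (metis add_pos_nonneg real_sqrt_gt_zero real_sqrt_ge_zero add_pos_nonneg)
    have "(sqrt (a + w) - sqrt w) * (sqrt (a + w) + sqrt w) = a"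
      using assms that by (simp add: algebra_simps power2_eq_square[symmetric])
    then show ?thesis using pos by (simp add: field_simps)
  qed
  have "sqrt (a + w1) + sqrt w1 < sqrt (a + w2) + sqrt w2"
    using assms by (intro add_strict_mono) auto
  moreover have "0 < sqrt (a + w1) + sqrt w1" using assms
    by (metis add_pos_nonneg real_sqrt_gt_zero real_sqrt_ge_zero)
  ultimately have "a / (sqrt (a + w2) + sqrt w2) < a / (sqrt (a + w1) + sqrt w1)"
    using assms by (intro divide_strict_left_mono) auto
  then show ?thesis using id assms by simp
qed



definition Uf :: "real \<Rightarrow> real \<Rightarrow> real \<Rightarrow> real" where
  "Uf A w = (SOME u. u 0 = 1 \<and> (\<forall>t\<ge>0. 1 \<le> u t \<and>
            (u has_real_derivative (sqrt (A^2 * t^2 + w) + 1 / u t)) (at t within {0..})))"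

definition Vf :: "real \<Rightarrow> real \<Rightarrow> real \<Rightarrow> real" where
  "Vf A w t = (if t < 0 then 1 else 1 / Uf A w t)"

locale jetA = fixes A :: real assumes Apos: "A > 0"
begin

lemma U_spec:
  assumes "0 \<le> w"
  shows "Uf A w 0 = 1 \<and> (\<forall>t\<ge>0. 1 \<le> Uf A w t \<and>
            (Uf A w has_real_derivative (sqrt (A^2 * t^2 + w) + 1 / Uf A w t)) (at t within {0..}))"
  unfolding Uf_def by (rule someI_ex[OF exists_U[OF Apos assms]])

lemma U0: "0 \<le> w \<Longrightarrow> Uf A w 0 = 1" using U_spec by blast
lemma U_ge1: "0 \<le> w \<Longrightarrow> 0 \<le> t \<Longrightarrow> 1 \<le> Uf A w t" using U_spec by blast
lemma U_deriv: "0 \<le> w \<Longrightarrow> 0 \<le> t \<Longrightarrow>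
   (Uf A w has_real_derivative (sqrt (A^2 * t^2 + w) + 1 / Uf A w t)) (at t within {0..})"
  using U_spec by blast
lemma U_deriv_Icc: "0 \<le> w \<Longrightarrow> t \<in> {a..b} \<Longrightarrow> 0 \<le> a \<Longrightarrow>
   (Uf A w has_real_derivative (sqrt (A^2 * t^2 + w) + 1 / Uf A w t)) (at t within {a..b})"
  using U_deriv[of w t] has_field_derivative_subset[of _ _ t "{0..}" "{a..b}"] by auto

lemma U_cont: "0 \<le> w \<Longrightarrow> continuous_on {0..} (Uf A w)"
  by (rule DERIV_continuous_on[OF U_deriv]) auto

lemma s_nonneg: "0 \<le> w \<Longrightarrow> 0 \<le> sqrt (A^2 * t^2 + w)" by simp

lemma V_deriv:
  assumes w: "0 \<le> w" and t: "0 \<le> t"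
  shows "(Vf A w has_real_derivative jet_rhs A w t (Vf A w t)) (at t within {0..})"
proof -
  let ?U = "Uf A w" and ?s = "sqrt (A^2 * t^2 + w)"
  have U1: "1 \<le> ?U t" by (rule U_ge1[OF w t])
  have "((\<lambda>t. inverse (?U t)) has_real_derivative - ((?s + 1 / ?U t) * inverse (?U t ^ Suc (Suc 0)))) (at t within {0..})"
    by (rule DERIV_inverse_fun[OF U_deriv[OF w t]]) (use U1 in auto)
  then have "(Vf A w has_real_derivative - ((?s + 1 / ?U t) * inverse (?U t ^ Suc (Suc 0)))) (at t within {0..})"
    by (rule has_field_derivative_transform_within[where d=1]) (use t in \<open>auto simp: Vf_def divide_inverse\<close>)
  moreover have "- ((?s + 1 / ?U t) * inverse (?U t ^ Suc (Suc 0))) = jet_rhs A w t (Vf A w t)"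
    using U1 t by (simp add: jet_rhs_def Vf_def field_simps power2_eq_square)
  ultimately show ?thesis by simp
qed

lemma v_sol_eq:
  assumes w: "0 \<le> w"
  shows "v_sol A w = Vf A w"
  unfolding v_sol_def
proof (rule the_equality)
  show "Vf A w 0 = 1 \<and> (\<forall>t\<ge>0. (Vf A w has_real_derivative jet_rhs A w t (Vf A w t)) (at t within {0..})) \<and>
        (\<forall>t<0. Vf A w t = 1)"
    using U0[OF w] V_deriv[OF w] by (auto simp: Vf_def)
  fix f assume f: "f 0 = 1 \<and> (\<forall>t\<ge>0. (f has_real_derivative jet_rhs A w t (f t)) (at t within {0..})) \<and>
        (\<forall>t<0. f t = 1)"
  show "f = Vf A w"
  proof
    fix t
    show "f t = Vf A w t"
    proof (cases "t < 0")
      case True then show ?thesis using f by (simp add: Vf_def)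
    next
      case False
      then have t: "0 \<le> t" by simp
      have "\<forall>x\<in>{0..t}. f x = Vf A w x"
      proof (rule ode_unique[OF t w])
        fix x assume x: "x \<in> {0..t}"
        show "(f has_real_derivative jet_rhs A w x (f x)) (at x within {0..t})"
          using f x by (auto intro: deriv_Ici_to_Icc)
        show "(Vf A w has_real_derivative jet_rhs A w x (Vf A w x)) (at x within {0..t})"
          using V_deriv[OF w, of x] x by (auto intro: deriv_Ici_to_Icc)
      next
        show "f 0 = Vf A w 0" using f U0[OF w] by (simp add: Vf_def)
      qed
      then show ?thesis using t by auto
    qed
  qed
qed

lemma U_strict:
  assumes w: "0 \<le> w" and ab: "0 \<le> a" "a < b"
  shows "Uf A w a < Uf A w b"
proof (rule deriv_pos_strict[OF ab(2)])
  fix t assume t: "t \<in> {a..b}"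
  show "(Uf A w has_real_derivative (sqrt (A^2 * t^2 + w) + 1 / Uf A w t)) (at t within {a..b})"
    by (rule U_deriv_Icc[OF w t ab(1)])
  have "1 \<le> Uf A w t" using U_ge1[OF w] t ab by auto
  then show "0 < sqrt (A^2 * t^2 + w) + 1 / Uf A w t"
    using s_nonneg[OF w, of t] by (simp add: add_nonneg_pos)
qed

lemma U_mono:
  assumes w: "0 \<le> w" and ab: "0 \<le> a" "a \<le> b"
  shows "Uf A w a \<le> Uf A w b"
proof (cases "a = b")
  case False
  then have "a < b" using ab by simp
  then show ?thesis using U_strict[OF w ab(1)] by (simp add: less_imp_le)
qed simp

lemma U_sq:
  assumes w: "0 \<le> w" and t: "0 \<le> t"
  shows "1 + 2 * t \<le> (Uf A w t)^2"
proof -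
  let ?U = "Uf A w"
  have "(\<lambda>x. ?U x * ?U x - 2 * x) 0 \<le> (\<lambda>x. ?U x * ?U x - 2 * x) t"
  proof (rule deriv_nonneg_mono'[where f="\<lambda>x. ?U x * ?U x - 2 * x" and a=0 and b=t and f'="\<lambda>x. 2 * ?U x * sqrt (A^2 * x^2 + w)"])
    fix x assume x: "x \<in> {0..t}"
    have U1: "1 \<le> ?U x" using U_ge1[OF w] x by auto
    note d = U_deriv_Icc[OF w x order.refl]
    have "((\<lambda>x. ?U x * ?U x - 2 * x) has_real_derivative
       ((sqrt (A^2 * x^2 + w) + 1 / ?U x) * ?U x + (sqrt (A^2 * x^2 + w) + 1 / ?U x) * ?U x - 2 * 1)) (at x within {0..t})"
      by (intro DERIV_diff DERIV_mult d DERIV_cmult DERIV_ident)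
    moreover have "(sqrt (A^2 * x^2 + w) + 1 / ?U x) * ?U x + (sqrt (A^2 * x^2 + w) + 1 / ?U x) * ?U x - 2 * 1
        = 2 * ?U x * sqrt (A^2 * x^2 + w)" using U1 by (simp add: field_simps)
    ultimately show "((\<lambda>x. ?U x * ?U x - 2 * x) has_real_derivative 2 * ?U x * sqrt (A^2 * x^2 + w)) (at x within {0..t})"
      by simp
    show "0 \<le> 2 * ?U x * sqrt (A^2 * x^2 + w)" using U1 s_nonneg[OF w] by simp
  qed (use t in auto)
  then show ?thesis using U0[OF w] by (simp add: power2_eq_square)
qed

lemma U_lin:
  assumes w: "0 \<le> w" and t: "0 \<le> t"
  shows "1 + sqrt w * t \<le> Uf A w t"
proof -
  let ?U = "Uf A w"
  have "(\<lambda>x. ?U x - sqrt w * x) 0 \<le> (\<lambda>x. ?U x - sqrt w * x) t"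
  proof (rule deriv_nonneg_mono'[where f="\<lambda>x. ?U x - sqrt w * x" and a=0 and b=t and f'="\<lambda>x. sqrt (A^2 * x^2 + w) + 1 / ?U x - sqrt w"])
    fix x assume x: "x \<in> {0..t}"
    have U1: "1 \<le> ?U x" using U_ge1[OF w] x by auto
    note d = U_deriv_Icc[OF w x order.refl]
    have "((\<lambda>x. ?U x - sqrt w * x) has_real_derivative
       (sqrt (A^2 * x^2 + w) + 1 / ?U x) - sqrt w * 1) (at x within {0..t})"
      by (intro DERIV_diff d DERIV_cmult DERIV_ident)
    then show "((\<lambda>x. ?U x - sqrt w * x) has_real_derivative sqrt (A^2 * x^2 + w) + 1 / ?U x - sqrt w) (at x within {0..t})"
      by simp
    have "sqrt w \<le> sqrt (A^2 * x^2 + w)" by simp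
    moreover have "0 \<le> 1 / ?U x" using U1 by simp
    ultimately show "0 \<le> sqrt (A^2 * x^2 + w) + 1 / ?U x - sqrt w" by linarith
  qed (use t in auto)
  then show ?thesis using U0[OF w] by simp
qed

lemma te_props:
  assumes w: "0 \<le> w" and vn: "0 < vn" "vn < 1"
  shows "0 < t_end A vn w" "Uf A w (t_end A vn w) = 1 / vn"
    "Vf A w (t_end A vn w) = vn"
    "\<And>t. 0 \<le> t \<Longrightarrow> Vf A w t = vn \<Longrightarrow> t = t_end A vn w"
proof -
  let ?U = "Uf A w"
  define b where "b = 1 / vn^2"
  have b0: "0 \<le> b" by (simp add: b_def)
  have "(1 / vn)^2 = b" by (simp add: b_def power_divide)
  then have "(1 / vn)^2 \<le> 1 + 2 * b" using b0 by linarith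
  also have "\<dots> \<le> (?U b)^2" by (rule U_sq[OF w b0])
  finally have sq: "(1 / vn)^2 \<le> (?U b)^2" .
  have "1 / vn \<le> ?U b" using power2_le_imp_le[OF sq] U_ge1[OF w b0] by simp
  moreover have "?U 0 \<le> 1 / vn" using U0[OF w] vn by simp
  moreover have "continuous_on {0..b} ?U" using U_cont[OF w] by (rule continuous_on_subset) auto
  ultimately obtain t0 where t0: "0 \<le> t0" "t0 \<le> b" "?U t0 = 1 / vn"
    using IVT'[of ?U 0 "1/vn" b] b0 by auto
  have uniq: "t = t0" if "0 \<le> t" "Vf A w t = vn" for t
  proof -
    have "1 / ?U t = vn" using that by (simp add: Vf_def)
    then have "?U t = 1 / vn" by (metis inverse_eq_divide inverse_inverse_eq)
    show ?thesis
    proof (rule ccontr)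
      assume "t \<noteq> t0"
      then have "t < t0 \<or> t0 < t" by auto
      then show False using U_strict[OF w, of t t0] U_strict[OF w, of t0 t] that(1) t0(1,3) \<open>?U t = 1 / vn\<close>
        by auto
    qed
  qed
  have V0: "Vf A w t0 = vn" using t0 by (simp add: Vf_def del: divide_le_eq_1)
  have te: "t_end A vn w = t0" unfolding t_end_def v_sol_eq[OF w]
  proof (rule the_equality)
    show "0 \<le> t0 \<and> Vf A w t0 = vn" using t0 V0 by simp
    show "\<And>t. 0 \<le> t \<and> Vf A w t = vn \<Longrightarrow> t = t0" using uniq by blast
  qed
  show "Uf A w (t_end A vn w) = 1 / vn" "Vf A w (t_end A vn w) = vn" using te t0 V0 by auto
  show "\<And>t. 0 \<le> t \<Longrightarrow> Vf A w t = vn \<Longrightarrow> t = t_end A vn w" using uniq te by auto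
  have "t0 \<noteq> 0" using t0 U0[OF w] vn by auto
  then show "0 < t_end A vn w" using te t0 by auto
qed

end


context jetA begin

lemma U_lower_cmp:
  assumes w: "0 \<le> w1" "w1 \<le> w2" and T: "0 \<le> T"
  shows "Uf A w1 T \<le> Uf A w2 T"
proof -
  have w2: "0 \<le> w2" using w by simp
  let ?U1 = "Uf A w1" and ?U2 = "Uf A w2"
  define k where "k x = 1 / (?U1 x * ?U2 x)" for x
  have c1: "continuous_on {0..T} ?U1" using U_cont[OF w(1)] by (rule continuous_on_subset) auto
  have c2: "continuous_on {0..T} ?U2" using U_cont[OF w2] by (rule continuous_on_subset) auto
  have U1ge: "1 \<le> ?U1 x" "1 \<le> ?U2 x" if "x \<in> {0..T}" for x
    using U_ge1[OF w(1)] U_ge1[OF w2] that by auto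
  have nz: "\<forall>x\<in>{0..T}. ?U1 x * ?U2 x \<noteq> 0"
  proof
    fix x assume "x \<in> {0..T}"
    then have "1 \<le> ?U1 x" "1 \<le> ?U2 x" by (rule U1ge)+
    then show "?U1 x * ?U2 x \<noteq> 0" by simp
  qed
  have ck: "continuous_on {0..T} k" unfolding k_def
    by (intro continuous_on_divide continuous_on_const continuous_on_mult c1 c2 nz)
  define Kf where "Kf x = integral {0..x} k" for x
  define \<phi> where "\<phi> x = exp (Kf x) * (?U2 x - ?U1 x)" for x
  have "\<phi> 0 \<le> \<phi> T"
  proof (rule deriv_nonneg_mono'[where f=\<phi> and a=0 and b=T and
        f'="\<lambda>x. exp (Kf x) * (sqrt (A^2 * x^2 + w2) - sqrt (A^2 * x^2 + w1))"])
    fix x assume x: "x \<in> {0..T}"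
    have dK: "(Kf has_real_derivative k x) (at x within {0..T})"
      unfolding Kf_def by (rule integral_has_real_derivative[OF ck x])
    have dE: "((\<lambda>x. exp (Kf x)) has_real_derivative exp (Kf x) * k x) (at x within {0..T})"
      using dK by (auto intro!: derivative_eq_intros)
    have dD: "((\<lambda>x. ?U2 x - ?U1 x) has_real_derivative
        (sqrt (A^2 * x^2 + w2) + 1 / ?U2 x) - (sqrt (A^2 * x^2 + w1) + 1 / ?U1 x)) (at x within {0..T})"
      by (rule DERIV_diff[OF U_deriv_Icc[OF w2 x order.refl] U_deriv_Icc[OF w(1) x order.refl]])
    note d = DERIV_mult[OF dE dD]
    show "(\<phi> has_real_derivative exp (Kf x) * (sqrt (A^2 * x^2 + w2) - sqrt (A^2 * x^2 + w1))) (at x within {0..T})"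
      unfolding \<phi>_def
    proof (rule DERIV_cong[OF d])
      have "1 \<le> ?U1 x" "1 \<le> ?U2 x" using U1ge[OF x] by auto
      then show "exp (Kf x) * k x * (?U2 x - ?U1 x) +
          ((sqrt (A^2 * x^2 + w2) + 1 / ?U2 x) - (sqrt (A^2 * x^2 + w1) + 1 / ?U1 x)) * exp (Kf x) =
          exp (Kf x) * (sqrt (A^2 * x^2 + w2) - sqrt (A^2 * x^2 + w1))"
        unfolding k_def by (simp add: field_simps)
    qed
    have "sqrt (A^2 * x^2 + w1) \<le> sqrt (A^2 * x^2 + w2)" using w by simp
    then show "0 \<le> exp (Kf x) * (sqrt (A^2 * x^2 + w2) - sqrt (A^2 * x^2 + w1))" by simp
  qed (use T in auto)
  moreover have "\<phi> 0 = 0" unfolding \<phi>_def using U0[OF w(1)] U0[OF w2] by simp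
  ultimately have "0 \<le> exp (Kf T) * (?U2 T - ?U1 T)" unfolding \<phi>_def by simp
  then show ?thesis by (simp add: zero_le_mult_iff)
qed

lemma U_upper_cmp:
  assumes w: "0 \<le> w1" "w1 \<le> w2" and T: "0 \<le> T"
  shows "Uf A w2 T \<le> Uf A w1 T + T * (sqrt w2 - sqrt w1)"
proof -
  have w2: "0 \<le> w2" using w by simp
  let ?U1 = "Uf A w1" and ?U2 = "Uf A w2"
  define \<delta> where "\<delta> = sqrt w2 - sqrt w1"
  define e where "e x = ?U1 x + x * \<delta> - ?U2 x" for x
  have "e 0 \<le> e T"
  proof (rule deriv_nonneg_mono'[where f=e and a=0 and b=T and
        f'="\<lambda>x. (sqrt (A^2 * x^2 + w1) + 1 / ?U1 x) + 1 * \<delta> - (sqrt (A^2 * x^2 + w2) + 1 / ?U2 x)"])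
    fix x assume x: "x \<in> {0..T}"
    have dx: "((\<lambda>x. x * \<delta>) has_real_derivative 1 * \<delta>) (at x within {0..T})"
      by (rule DERIV_cmult_right[OF DERIV_ident])
    show "(e has_real_derivative (sqrt (A^2 * x^2 + w1) + 1 / ?U1 x) + 1 * \<delta> - (sqrt (A^2 * x^2 + w2) + 1 / ?U2 x)) (at x within {0..T})"
      unfolding e_def
      by (rule DERIV_diff[OF DERIV_add[OF U_deriv_Icc[OF w(1) x order.refl] dx] U_deriv_Icc[OF w2 x order.refl]])
    have x0: "0 \<le> x" using x by simp
    have "sqrt (A^2 * x^2 + w2) - sqrt (A^2 * x^2 + w1) \<le> \<delta>"
      unfolding \<delta>_def by (rule sqrt_shift_le) (use w in auto)
    moreover have "1 / ?U2 x \<le> 1 / ?U1 x"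
      using U_lower_cmp[OF w x0] U_ge1[OF w(1) x0] by (simp add: divide_left_mono frac_le)
    ultimately show "0 \<le> (sqrt (A^2 * x^2 + w1) + 1 / ?U1 x) + 1 * \<delta> - (sqrt (A^2 * x^2 + w2) + 1 / ?U2 x)"
      by simp
  qed (use T in auto)
  then show ?thesis unfolding e_def \<delta>_def using U0[OF w(1)] U0[OF w2] by simp
qed

lemma V_pos: "0 \<le> w \<Longrightarrow> 0 \<le> t \<Longrightarrow> 0 < Vf A w t \<and> Vf A w t \<le> 1"
  using U_ge1[of w t] by (simp add: Vf_def)

lemma V_cmp:
  assumes w: "0 \<le> w1" "w1 \<le> w2" and t: "0 \<le> t"
  shows "Vf A w2 t \<le> Vf A w1 t" "Vf A w1 t - Vf A w2 t \<le> t * (sqrt w2 - sqrt w1)"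
proof -
  have w2: "0 \<le> w2" using w by simp
  let ?U1 = "Uf A w1 t" and ?U2 = "Uf A w2 t"
  have l: "?U1 \<le> ?U2" by (rule U_lower_cmp[OF w t])
  have u: "?U2 \<le> ?U1 + t * (sqrt w2 - sqrt w1)" by (rule U_upper_cmp[OF w t])
  have g1: "1 \<le> ?U1" "1 \<le> ?U2" using U_ge1[OF w(1) t] U_ge1[OF w2 t] by auto
  show "Vf A w2 t \<le> Vf A w1 t" using l g1 t by (simp add: Vf_def frac_le)
  have "Vf A w1 t - Vf A w2 t = (?U2 - ?U1) / (?U1 * ?U2)" using g1 t by (simp add: Vf_def field_simps)
  also have "\<dots> \<le> ?U2 - ?U1"
  proof -
    have "1 \<le> ?U1 * ?U2" using g1 by (metis mult_mono' mult_1_right zero_le_one)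
    moreover have "0 \<le> ?U2 - ?U1" using l by simp
    ultimately show ?thesis by (simp add: divide_le_eq mult_le_cancel_left1 mult_left_le)
  qed
  also have "\<dots> \<le> t * (sqrt w2 - sqrt w1)" using u by simp
  finally show "Vf A w1 t - Vf A w2 t \<le> t * (sqrt w2 - sqrt w1)" .
qed

lemma U_le_te:
  assumes w: "0 \<le> w" and vn: "0 < vn" "vn < 1" and t: "0 \<le> t" "t \<le> t_end A vn w"
  shows "Uf A w t \<le> 1 / vn"
  using U_mono[OF w t] te_props(2)[OF w vn] by simp

lemma V_ge_te:
  assumes w: "0 \<le> w" and vn: "0 < vn" "vn < 1" and t: "0 \<le> t" "t \<le> t_end A vn w"
  shows "vn \<le> Vf A w t"
proof -
  have "Uf A w t \<le> 1 / vn" by (rule U_le_te[OF w vn t])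
  moreover have "1 \<le> Uf A w t" using U_ge1[OF w t(1)] .
  ultimately show ?thesis using t vn by (simp add: Vf_def field_simps)
qed

lemma te_cmp:
  assumes w: "0 \<le> w1" "w1 \<le> w2" and vn: "0 < vn" "vn < 1"
  shows "t_end A vn w2 \<le> t_end A vn w1"
    "vn * (t_end A vn w1 - t_end A vn w2) \<le> t_end A vn w2 * (sqrt w2 - sqrt w1)"
proof -
  have w2: "0 \<le> w2" using w by simp
  let ?U1 = "Uf A w1" and ?U2 = "Uf A w2"
  define t1 where "t1 = t_end A vn w1"
  define t2 where "t2 = t_end A vn w2"
  have t1: "0 < t1" "?U1 t1 = 1 / vn" using te_props[OF w(1) vn] by (auto simp: t1_def)
  have t2: "0 < t2" "?U2 t2 = 1 / vn" using te_props[OF w2 vn] by (auto simp: t2_def)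
  have c: "?U1 t2 \<le> ?U2 t2" using U_lower_cmp[OF w, of t2] t2 by simp
  show le: "t_end A vn w2 \<le> t_end A vn w1"
  proof (rule ccontr)
    assume "\<not> ?thesis"
    then have "t1 < t2" by (simp add: t1_def t2_def)
    then have "?U1 t1 < ?U1 t2" using U_strict[OF w(1), of t1 t2] t1 by simp
    then show False using c t1 t2 by simp
  qed
  have "(\<lambda>x. ?U1 x - vn * x) t2 \<le> (\<lambda>x. ?U1 x - vn * x) t1"
  proof (rule deriv_nonneg_mono'[where f="\<lambda>x. ?U1 x - vn * x" and a=t2 and b=t1 and
        f'="\<lambda>x. (sqrt (A^2 * x^2 + w1) + 1 / ?U1 x) - vn * 1"])
    fix x assume x: "x \<in> {t2..t1}"
    show "((\<lambda>x. ?U1 x - vn * x) has_real_derivative (sqrt (A^2 * x^2 + w1) + 1 / ?U1 x) - vn * 1) (at x within {t2..t1})"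
      by (rule DERIV_diff[OF U_deriv_Icc[OF w(1) x] DERIV_cmult[OF DERIV_ident]]) (use t2 in simp)
    have x0: "0 \<le> x" using x t2 by simp
    have "?U1 x \<le> 1 / vn" using U_le_te[OF w(1) vn x0] x by (simp add: t1_def)
    moreover have "1 \<le> ?U1 x" by (rule U_ge1[OF w(1) x0])
    ultimately have "vn \<le> 1 / ?U1 x" using vn by (simp add: field_simps)
    moreover have "0 \<le> sqrt (A^2 * x^2 + w1)" using s_nonneg[OF w(1), of x] .
    ultimately show "0 \<le> (sqrt (A^2 * x^2 + w1) + 1 / ?U1 x) - vn * 1" by linarith
  qed (use le in \<open>auto simp: t1_def t2_def\<close>)
  then have "vn * (t1 - t2) \<le> ?U1 t1 - ?U1 t2" by (simp add: algebra_simps)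
  also have "\<dots> = ?U2 t2 - ?U1 t2" using t1 t2 by simp
  also have "\<dots> \<le> t2 * (sqrt w2 - sqrt w1)" using U_upper_cmp[OF w, of t2] t2 by simp
  finally show "vn * (t_end A vn w1 - t_end A vn w2) \<le> t_end A vn w2 * (sqrt w2 - sqrt w1)"
    by (simp add: t1_def t2_def)
qed

end


definition gF :: "real \<Rightarrow> real \<Rightarrow> real \<Rightarrow> real" where
  "gF A w t = A * t / sqrt (A^2 * t^2 + w)"
definition FF :: "real \<Rightarrow> real \<Rightarrow> real \<Rightarrow> real" where
  "FF A w t = A * t * Vf A w t / sqrt (A^2 * t^2 + w)"

context jetA begin

lemma FF_eq: "FF A w t = gF A w t * Vf A w t"
  by (simp add: FF_def gF_def)

lemma g_int:
  assumes w: "0 \<le> w" and T: "0 \<le> T"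
  shows "(gF A w has_integral (sqrt (A^2 * T^2 + w) - sqrt w) / A) {0..T}"
proof -
  have "(gF A w has_integral (sqrt (A^2 * T^2 + w) / A - sqrt (A^2 * 0^2 + w) / A)) {0..T}"
  proof (rule fundamental_theorem_of_calculus_interior[OF T])
    show "continuous_on {0..T} (\<lambda>t. sqrt (A^2 * t^2 + w) / A)"
      using Apos by (intro continuous_intros) auto
    fix x assume x: "x \<in> {0<..<T}"
    then have pos: "0 < A^2 * x^2 + w" using Apos w by (simp add: add_pos_nonneg)
    have d: "((\<lambda>t. A^2 * t^2 + w) has_real_derivative A^2 * (2 * x)) (at x)"
      by (auto intro!: derivative_eq_intros)
    have "((\<lambda>t. sqrt (A^2 * t^2 + w) / A) has_real_derivative
        (inverse (sqrt (A^2 * x^2 + w)) / 2 * (A^2 * (2 * x))) / A) (at x)"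
      by (rule DERIV_cdivide[OF DERIV_chain2[OF DERIV_real_sqrt[OF pos] d]])
    moreover have "(inverse (sqrt (A^2 * x^2 + w)) / 2 * (A^2 * (2 * x))) / A = gF A w x"
      using Apos by (simp add: gF_def field_simps power2_eq_square)
    ultimately show "((\<lambda>t. sqrt (A^2 * t^2 + w) / A) has_vector_derivative gF A w x) (at x)"
      by (simp add: has_real_derivative_iff_has_vector_derivative)
  qed
  then show ?thesis by (simp add: diff_divide_distrib)
qed

lemma g_bounds:
  assumes w: "0 \<le> w" and t: "0 \<le> t"
  shows "0 \<le> gF A w t" "gF A w t \<le> 1"
proof -
  show "0 \<le> gF A w t" unfolding gF_def using Apos t w by (intro divide_nonneg_nonneg mult_nonneg_nonneg) auto
  have "A * t = sqrt (A^2 * t^2)" using Apos t by (simp add: real_sqrt_mult)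
  also have "\<dots> \<le> sqrt (A^2 * t^2 + w)" using w by simp
  finally have le: "A * t \<le> sqrt (A^2 * t^2 + w)" .
  show "gF A w t \<le> 1"
  proof (cases "sqrt (A^2 * t^2 + w) = 0")
    case True then show ?thesis by (simp add: gF_def)
  next
    case False
    then have "0 < sqrt (A^2 * t^2 + w)" using w by (simp add: order_le_neq_trans)
    then show ?thesis using le by (simp add: gF_def divide_le_eq)
  qed
qed

lemma g_anti:
  assumes w: "0 \<le> w1" "w1 \<le> w2" and t: "0 \<le> t"
  shows "gF A w2 t \<le> gF A w1 t"
proof (cases "t = 0")
  case True then show ?thesis by (simp add: gF_def)
next
  case False
  then have tp: "0 < t" using t by simp
  have p1: "0 < sqrt (A^2 * t^2 + w1)" using Apos tp w by (simp add: add_pos_nonneg)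
  have "sqrt (A^2 * t^2 + w1) \<le> sqrt (A^2 * t^2 + w2)" using w by simp
  then show ?thesis unfolding gF_def using p1 Apos t
    by (intro divide_left_mono) auto
qed

lemma V_cont: "0 \<le> w \<Longrightarrow> continuous_on {0..T} (Vf A w)"
  by (rule DERIV_continuous_on[where D="\<lambda>t. jet_rhs A w t (Vf A w t)"])
     (auto intro: deriv_Ici_to_Icc V_deriv)

lemma F_int:
  assumes w: "0 \<le> w"
  shows "FF A w integrable_on {0..T}"
proof (cases "w = 0")
  case True
  have "Vf A w integrable_on {0..T}" by (rule integrable_continuous_real[OF V_cont[OF w]])
  moreover have "FF A w x = Vf A w x" if "x \<in> {0..T} - {0}" for x
  proof -
    have "0 < x" using that by auto
    then show ?thesis using Apos True by (simp add: FF_def real_sqrt_mult)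
  qed
  ultimately show ?thesis by (rule_tac integrable_spike_finite[where S="{0}"]) auto
next
  case False
  then have wp: "0 < w" using w by simp
  have "continuous_on {0..T} (FF A w)" unfolding FF_def
  proof (intro continuous_on_divide continuous_intros V_cont[OF w] ballI)
    fix x
    have "0 < A^2 * x^2 + w" using wp by (simp add: add_nonneg_pos)
    then show "sqrt (A^2 * x^2 + w) \<noteq> 0" by simp
  qed
  then show ?thesis by (rule integrable_continuous_real)
qed

lemma I_eq: "0 \<le> w \<Longrightarrow> I_fun A vn w = integral {0..t_end A vn w} (FF A w)"
  unfolding I_fun_def FF_def by (simp add: v_sol_eq FF_def[abs_def])

end


context jetA begin

lemma F_bounds:
  assumes w: "0 \<le> w" and t: "0 \<le> t"
  shows "0 \<le> FF A w t" "FF A w t \<le> 1"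
proof -
  have "0 \<le> gF A w t" "gF A w t \<le> 1" by (rule g_bounds[OF w t])+
  moreover have "0 < Vf A w t" "Vf A w t \<le> 1" using V_pos[OF w t] by auto
  ultimately show "0 \<le> FF A w t" "FF A w t \<le> 1" unfolding FF_eq
    by (simp_all add: mult_le_one)
qed

lemma I_cmp:
  assumes w: "0 \<le> w1" "w1 < w2" and vn: "0 < vn" "vn < 1"
  shows "I_fun A vn w2 < I_fun A vn w1"
    "I_fun A vn w1 - I_fun A vn w2 \<le>
       ((t_end A vn 0)^2 + 1 / A + t_end A vn 0 / vn) * (sqrt w2 - sqrt w1)"
proof -
  have w2: "0 \<le> w2" and w12: "w1 \<le> w2" using w by auto
  define t1 where "t1 = t_end A vn w1"
  define t2 where "t2 = t_end A vn w2"
  define T0 where "T0 = t_end A vn 0"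
  define \<delta> where "\<delta> = sqrt w2 - sqrt w1"
  have \<delta>0: "0 \<le> \<delta>" using w by (simp add: \<delta>_def)
  have t1p: "0 < t1" using te_props(1)[OF w(1) vn] by (simp add: t1_def)
  have t2p: "0 < t2" using te_props(1)[OF w2 vn] by (simp add: t2_def)
  have t21: "t2 \<le> t1" and tgap: "vn * (t1 - t2) \<le> t2 * \<delta>"
    using te_cmp[OF w(1) w12 vn] by (auto simp: t1_def t2_def \<delta>_def)
  have t1T0: "t1 \<le> T0" using te_cmp(1)[OF order.refl w(1) vn] by (simp add: t1_def T0_def)
  define F1 where "F1 = FF A w1"
  define F2 where "F2 = FF A w2"
  define g1 where "g1 = gF A w1"
  define g2 where "g2 = gF A w2"
  have iF1: "F1 integrable_on {a..b}" if "0 \<le> a" for a b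
    using integrable_subinterval_real[OF F_int[OF w(1), of b], of a b] that by (auto simp: F1_def)
  have iF2: "F2 integrable_on {a..b}" if "0 \<le> a" for a b
    using integrable_subinterval_real[OF F_int[OF w2, of b], of a b] that by (auto simp: F2_def)
  have I1: "I_fun A vn w1 = integral {0..t2} F1 + integral {t2..t1} F1"
    using I_eq[OF w(1)] Henstock_Kurzweil_Integration.integral_combine[where a=0 and c=t2 and b=t1 and f=F1] t2p t21 iF1[of 0 t1]
    by (simp add: F1_def t1_def)
  have I2: "I_fun A vn w2 = integral {0..t2} F2"
    using I_eq[OF w2] by (simp add: F2_def t2_def)
  have ext0: "0 \<le> integral {t2..t1} F1"
    by (rule integral_nonneg[OF iF1]) (use t2p F_bounds[OF w(1)] in \<open>auto simp: F1_def\<close>)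
  have "integral {t2..t1} F1 \<le> integral {t2..t1} (\<lambda>_. 1)"
    by (rule integral_le[OF iF1]) (use t2p F_bounds[OF w(1)] in \<open>auto simp: F1_def\<close>)
  then have ext1: "integral {t2..t1} F1 \<le> t1 - t2" using t21 by simp
  define a where "a = A^2 * t2^2"
  have a0: "0 < a" using Apos t2p by (simp add: a_def)
  define G where "G = (sqrt (a + w1) - sqrt w1) / A - (sqrt (a + w2) - sqrt w2) / A"
  have gint: "((\<lambda>t. g1 t - g2 t) has_integral G) {0..t2}"
    unfolding G_def a_def g1_def g2_def
    by (intro has_integral_diff g_int) (use w2 w t2p in auto)
  have Gpos: "0 < G"
  proof -
    have "sqrt (a + w2) - sqrt w2 < sqrt (a + w1) - sqrt w1" by (rule sqrt_gap_strict[OF a0 w])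
    then show ?thesis unfolding G_def using Apos by (simp add: divide_strict_right_mono diff_divide_distrib[symmetric])
  qed
  have Gle: "G \<le> \<delta> / A"
  proof -
    have "sqrt (a + w1) \<le> sqrt (a + w2)" using w by simp
    then have "(sqrt (a + w1) - sqrt w1) - (sqrt (a + w2) - sqrt w2) \<le> \<delta>" by (simp add: \<delta>_def)
    then show ?thesis unfolding G_def using Apos by (simp add: diff_divide_distrib[symmetric] divide_right_mono)
  qed
  have pw: "vn * (g1 t - g2 t) \<le> F1 t - F2 t \<and> F1 t - F2 t \<le> t2 * \<delta> + (g1 t - g2 t)"
    if t: "t \<in> {0..t2}" for t
  proof -
    have t0: "0 \<le> t" using t by simp
    have tt1: "t \<le> t1" using t t21 by simp
    have e: "F1 t - F2 t = g1 t * (Vf A w1 t - Vf A w2 t) + (g1 t - g2 t) * Vf A w2 t"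
      by (simp add: F1_def F2_def g1_def g2_def FF_eq algebra_simps)
    have gb: "0 \<le> g1 t" "g1 t \<le> 1" using g_bounds[OF w(1) t0] by (auto simp: g1_def)
    have gd: "0 \<le> g1 t - g2 t" using g_anti[OF w(1) w12 t0] by (simp add: g1_def g2_def)
    have vd: "0 \<le> Vf A w1 t - Vf A w2 t" "Vf A w1 t - Vf A w2 t \<le> t * \<delta>"
      using V_cmp[OF w(1) w12 t0] by (auto simp: \<delta>_def)
    have v2: "vn \<le> Vf A w2 t" "Vf A w2 t \<le> 1"
      using V_ge_te[OF w2 vn t0] t V_pos[OF w2 t0] by (auto simp: t2_def)
    have p1: "0 \<le> g1 t * (Vf A w1 t - Vf A w2 t)" using gb vd by simp
    have p2: "(g1 t - g2 t) * vn \<le> (g1 t - g2 t) * Vf A w2 t" using gd v2 by (intro mult_left_mono) auto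
    have p3: "g1 t * (Vf A w1 t - Vf A w2 t) \<le> 1 * (t2 * \<delta>)"
    proof (rule mult_mono)
      show "Vf A w1 t - Vf A w2 t \<le> t2 * \<delta>" using vd t \<delta>0 by (meson atLeastAtMost_iff mult_right_mono order_trans)
    qed (use gb vd in auto)
    have p4: "(g1 t - g2 t) * Vf A w2 t \<le> (g1 t - g2 t) * 1" using gd v2 by (intro mult_left_mono) auto
    show ?thesis using e p1 p2 p3 p4 by (simp add: algebra_simps)
  qed
  have iD: "(\<lambda>t. F1 t - F2 t) integrable_on {0..t2}" by (intro integrable_diff iF1 iF2) simp_all
  have gi: "(\<lambda>t. g1 t - g2 t) integrable_on {0..t2}" using gint by blast
  have D: "integral {0..t2} F1 - integral {0..t2} F2 = integral {0..t2} (\<lambda>t. F1 t - F2 t)"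
    by (rule integral_diff[symmetric]) (intro iF1 iF2; simp)+
  have Dlo: "vn * G \<le> integral {0..t2} (\<lambda>t. F1 t - F2 t)"
  proof -
    have "integral {0..t2} (\<lambda>t. vn * (g1 t - g2 t)) \<le> integral {0..t2} (\<lambda>t. F1 t - F2 t)"
      by (rule integral_le[OF integrable_on_mult_right[OF gi] iD]) (use pw in auto)
    moreover have "integral {0..t2} (\<lambda>t. vn * (g1 t - g2 t)) = vn * G"
      using integral_mult_right integral_unique[OF gint] by metis
    ultimately show ?thesis using integral_unique[OF gint] by simp
  qed
  have Dhi: "integral {0..t2} (\<lambda>t. F1 t - F2 t) \<le> t2 * (t2 * \<delta>) + G"
  proof -
    have "integral {0..t2} (\<lambda>t. F1 t - F2 t) \<le> integral {0..t2} (\<lambda>t. t2 * \<delta> + (g1 t - g2 t))"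
      by (rule integral_le[OF iD integrable_add[OF integrable_const_ivl gi]]) (use pw in auto)
    moreover have "integral {0..t2} (\<lambda>t. t2 * \<delta> + (g1 t - g2 t)) = t2 * (t2 * \<delta>) + G"
      using integral_add[of "\<lambda>_. t2 * \<delta>" "{0..t2}" "\<lambda>t. g1 t - g2 t"] gi integral_unique[OF gint] t2p
      by (simp add: integrable_const_ivl)
    ultimately show ?thesis by simp
  qed
  have main: "I_fun A vn w1 - I_fun A vn w2 = integral {0..t2} (\<lambda>t. F1 t - F2 t) + integral {t2..t1} F1"
    using I1 I2 D by simp
  show "I_fun A vn w2 < I_fun A vn w1"
  proof -
    have "0 < vn * G" using Gpos vn by simp
    then show ?thesis using main Dlo ext0 by linarith
  qed
  have "t1 - t2 \<le> t2 * \<delta> / vn" using tgap vn by (simp add: field_simps)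
  then have "I_fun A vn w1 - I_fun A vn w2 \<le> t2 * (t2 * \<delta>) + \<delta> / A + t2 * \<delta> / vn"
    using main Dhi Gle ext1 by linarith
  also have "\<dots> = (t2^2 + 1 / A + t2 / vn) * \<delta>" by (simp add: power2_eq_square algebra_simps)
  also have "\<dots> \<le> (T0^2 + 1 / A + T0 / vn) * \<delta>"
  proof (rule mult_right_mono[OF _ \<delta>0])
    have "t2^2 \<le> T0^2" using t2p t21 t1T0 by (intro power_mono) auto
    moreover have "t2 / vn \<le> T0 / vn" using t21 t1T0 vn by (simp add: divide_right_mono)
    ultimately show "t2^2 + 1 / A + t2 / vn \<le> T0^2 + 1 / A + T0 / vn" by simp
  qed
  finally show "I_fun A vn w1 - I_fun A vn w2 \<le> ((t_end A vn 0)^2 + 1 / A + t_end A vn 0 / vn) * (sqrt w2 - sqrt w1)"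
    by (simp add: T0_def \<delta>_def)
qed

lemma I_le_te:
  assumes w: "0 \<le> w" and vn: "0 < vn" "vn < 1"
  shows "I_fun A vn w \<le> t_end A vn w"
proof -
  have "integral {0..t_end A vn w} (FF A w) \<le> integral {0..t_end A vn w} (\<lambda>_. 1)"
    by (rule integral_le[OF F_int[OF w]]) (use F_bounds[OF w] in auto)
  then show ?thesis using I_eq[OF w] te_props(1)[OF w vn] by simp
qed

lemma te_bound:
  assumes w: "0 < w" and vn: "0 < vn" "vn < 1"
  shows "sqrt w * t_end A vn w \<le> 1 / vn"
proof -
  have w0: "0 \<le> w" using w by simp
  have t0: "0 \<le> t_end A vn w" using te_props(1)[OF w0 vn] by simp
  have "1 + sqrt w * t_end A vn w \<le> Uf A w (t_end A vn w)" by (rule U_lin[OF w0 t0])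
  then show ?thesis using te_props(2)[OF w0 vn] by simp
qed

end


context jetA begin

lemma sol_char:
  assumes vn: "0 < vn" "vn < 1" and js: "jet_solution A B vn w te v"
  shows "0 < w" "te = t_end A vn w" "\<forall>t\<in>{0..te}. v t = Vf A w t" "I_fun A vn w = B"
proof -
  from js have wp: "0 < w" and tep: "0 < te" and v0: "v 0 = 1" and vte: "v te = vn"
    and int: "integral {0..te} (\<lambda>t. A * t * v t / sqrt (A^2 * t^2 + w)) = B"
    and ex: "\<exists>v'. continuous_on {0..te} v' \<and>
        (\<forall>t\<in>{0..te}. (v has_real_derivative v' t) (at t within {0..te}) \<and> v' t = jet_rhs A w t (v t))"
    unfolding jet_solution_def by auto
  show "0 < w" by (rule wp)
  have w0: "0 \<le> w" using wp by simp
  obtain v' where v': "\<forall>t\<in>{0..te}. (v has_real_derivative v' t) (at t within {0..te}) \<and> v' t = jet_rhs A w t (v t)"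
    using ex by blast
  have eq: "\<forall>t\<in>{0..te}. v t = Vf A w t"
  proof (rule ode_unique)
    show "0 \<le> te" using tep by simp
    show "0 \<le> w" by (rule w0)
    fix t assume t: "t \<in> {0..te}"
    show "(v has_real_derivative jet_rhs A w t (v t)) (at t within {0..te})" using v' t by metis
    show "(Vf A w has_real_derivative jet_rhs A w t (Vf A w t)) (at t within {0..te})"
      by (rule deriv_Ici_to_Icc[OF V_deriv[OF w0]]) (use t in simp)
  next
    show "v 0 = Vf A w 0" using v0 U0[OF w0] by (simp add: Vf_def)
  qed
  show "\<forall>t\<in>{0..te}. v t = Vf A w t" by (rule eq)
  have "Vf A w te = vn" using eq vte tep by auto
  then show te: "te = t_end A vn w" using te_props(4)[OF w0 vn, of te] tep by simp
  have "integral {0..te} (\<lambda>t. A * t * v t / sqrt (A^2 * t^2 + w)) = integral {0..te} (FF A w)"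
    by (rule integral_cong) (use eq in \<open>simp add: FF_def\<close>)
  then show "I_fun A vn w = B" using int I_eq[OF w0, of vn] te by simp
qed

lemma sol_exists:
  assumes vn: "0 < vn" "vn < 1" and wp: "0 < w" and IB: "I_fun A vn w = B"
  shows "jet_solution A B vn w (t_end A vn w) (Vf A w)"
proof -
  have w0: "0 \<le> w" using wp by simp
  let ?te = "t_end A vn w"
  have "continuous_on {0..?te} (\<lambda>t. jet_rhs A w t (Vf A w t))"
    unfolding jet_rhs_def by (intro continuous_intros V_cont[OF w0])
  moreover have "\<forall>t\<in>{0..?te}. (Vf A w has_real_derivative jet_rhs A w t (Vf A w t)) (at t within {0..?te})"
    using V_deriv[OF w0] by (auto intro: deriv_Ici_to_Icc)
  ultimately have ex: "\<exists>v'. continuous_on {0..?te} v' \<and>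
        (\<forall>t\<in>{0..?te}. (Vf A w has_real_derivative v' t) (at t within {0..?te}) \<and> v' t = jet_rhs A w t (Vf A w t))"
    by blast
  have "integral {0..?te} (\<lambda>t. A * t * Vf A w t / sqrt (A^2 * t^2 + w)) = B"
    using IB I_eq[OF w0, of vn] by (simp add: FF_def[abs_def])
  then show ?thesis unfolding jet_solution_def
    using ex wp te_props(1,3)[OF w0 vn] U0[OF w0] by (simp add: Vf_def)
qed

end

theorem theorem4p7:
  fixes A B vn :: real
  assumes "A > 0" and "B > 0" and "0 < vn" and "vn < 1"
  shows "((\<exists>w te v. jet_solution A B vn w te v) \<longleftrightarrow> I_fun A vn 0 > B) \<and>
         (\<forall>w1 te1 v1 w2 te2 v2. jet_solution A B vn w1 te1 v1 \<longrightarrow>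
           jet_solution A B vn w2 te2 v2 \<longrightarrow>
           w1 = w2 \<and> te1 = te2 \<and> (\<forall>t\<in>{0..te1}. v1 t = v2 t))"
proof -
  interpret jetA A by unfold_locales (rule assms(1))
  have vn: "0 < vn" "vn < 1" using assms by auto
  define I where "I w = I_fun A vn w" for w
  have strict: "I w2 < I w1" if "0 \<le> w1" "w1 < w2" for w1 w2
    using I_cmp(1)[OF that vn] by (simp add: I_def)
  have eqw: "w1 = w2" if "0 \<le> w1" "0 \<le> w2" "I w1 = I w2" for w1 w2
  proof (rule ccontr)
    assume "w1 \<noteq> w2"
    then have "w1 < w2 \<or> w2 < w1" by auto
    then show False using strict[of w1 w2] strict[of w2 w1] that by auto
  qed
  have part1: "(\<exists>w te v. jet_solution A B vn w te v) \<longleftrightarrow> I 0 > B"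
  proof
    assume "\<exists>w te v. jet_solution A B vn w te v"
    then obtain w te v where js: "jet_solution A B vn w te v" by blast
    have "0 < w" "I w = B" using sol_char[OF vn js] by (auto simp: I_def)
    then show "I 0 > B" using strict[of 0 w] by simp
  next
    assume I0: "I 0 > B"
    define T0 where "T0 = t_end A vn 0"
    define C where "C = T0^2 + 1 / A + T0 / vn"
    have T0p: "0 < T0" using te_props(1)[OF order.refl vn] by (simp add: T0_def)
    have C0: "0 \<le> C" using T0p vn assms(1) by (simp add: C_def)
    define J where "J p = I (p^2)" for p
    have Jlip: "J p - J q \<le> C * (q - p) \<and> J q \<le> J p" if "0 \<le> p" "p \<le> q" for p q
    proof (cases "p = q")
      case True then show ?thesis by simp
    next
      case False
      then have pq: "p < q" using that by simp
      then have "p^2 < q^2" using that by (intro power_strict_mono) auto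
      then have "I_fun A vn (p^2) - I_fun A vn (q^2) \<le> C * (sqrt (q^2) - sqrt (p^2))"
        "I_fun A vn (q^2) < I_fun A vn (p^2)"
        using I_cmp[of "p^2" "q^2" vn] vn by (auto simp: C_def T0_def)
      then show ?thesis using that by (simp add: J_def I_def)
    qed
    define p1 where "p1 = min 1 ((I 0 - B) / (2 * (C + 1)))"
    have p1p: "0 < p1" using I0 C0 by (simp add: p1_def)
    have "C * p1 \<le> C * ((I 0 - B) / (2 * (C + 1)))" unfolding p1_def by (rule mult_left_mono[OF min.cobounded2 C0])
    also have "\<dots> < I 0 - B"
    proof -
      have q: "C / (2 * (C + 1)) < 1" using C0 by (simp add: field_simps)
      have "C * ((I 0 - B) / (2 * (C + 1))) = (C / (2 * (C + 1))) * (I 0 - B)" by simp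
      also have "\<dots> < 1 * (I 0 - B)" by (rule mult_strict_right_mono[OF q]) (use I0 in simp)
      finally show ?thesis by simp
    qed
    finally have Cp1: "C * p1 < I 0 - B" .
    have "J 0 - J p1 \<le> C * (p1 - 0)" using Jlip[of 0 p1] p1p by simp
    then have Jp1: "B < J p1" using Cp1 by (simp add: J_def)
    define p2 where "p2 = p1 + 1 / (vn * B) + 1"
    have p12: "p1 \<le> p2" using vn assms(2) by (simp add: p2_def)
    have p2p: "0 < p2" using p1p p12 by simp
    have "J p2 \<le> t_end A vn (p2^2)" using I_le_te[of "p2^2" vn] vn by (simp add: J_def I_def)
    also have "t_end A vn (p2^2) \<le> 1 / (vn * p2)"
    proof -
      have "sqrt (p2^2) * t_end A vn (p2^2) \<le> 1 / vn" using te_bound[of "p2^2" vn] vn p2p by simp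
      then show ?thesis using p2p vn by (simp add: field_simps)
    qed
    also have "\<dots> < B"
    proof -
      have "1 / (vn * B) < p2" by (simp add: p2_def) (use p1p in linarith)
      then have "1 < vn * B * p2" using vn assms(2) by (simp add: field_simps)
      then show ?thesis using vn p2p by (simp add: field_simps)
    qed
    finally have Jp2: "J p2 < B" .
    have "continuous_on {p1..p2} J"
    proof (rule lipschitz_on_continuous_on)
      show "C-lipschitz_on {p1..p2} J"
      proof (rule lipschitz_onI)
        fix x y assume x: "x \<in> {p1..p2}" and y: "y \<in> {p1..p2}"
        show "dist (J x) (J y) \<le> C * dist x y"
        proof (cases "x \<le> y")
          case True
          then show ?thesis using Jlip[of x y] x p1p by (simp add: dist_real_def)
        next
          case False
          then show ?thesis using Jlip[of y x] y p1p by (simp add: dist_real_def abs_minus_commute)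
        qed
      qed (rule C0)
    qed
    then obtain p where p: "p1 \<le> p" "p \<le> p2" "J p = B"
      using IVT2'[of J p2 B p1] Jp1 Jp2 p12 by auto
    have wp: "0 < p^2" using p p1p by simp
    have "jet_solution A B vn (p^2) (t_end A vn (p^2)) (Vf A (p^2))"
      by (rule sol_exists[OF vn wp]) (use p in \<open>simp add: J_def I_def\<close>)
    then show "\<exists>w te v. jet_solution A B vn w te v" by blast
  qed
  have part2: "w1 = w2 \<and> te1 = te2 \<and> (\<forall>t\<in>{0..te1}. v1 t = v2 t)"
    if j1: "jet_solution A B vn w1 te1 v1" and j2: "jet_solution A B vn w2 te2 v2" for w1 te1 v1 w2 te2 v2
  proof -
    note c1 = sol_char[OF vn j1] and c2 = sol_char[OF vn j2]
    have "w1 = w2" using eqw[of w1 w2] c1 c2 by (simp add: I_def)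
    moreover then have "te1 = te2" using c1 c2 by simp
    moreover have "\<forall>t\<in>{0..te1}. v1 t = v2 t" using c1 c2 \<open>w1 = w2\<close> \<open>te1 = te2\<close> by simp
    ultimately show ?thesis by simp
  qed
  show ?thesis using part1 part2 by (simp add: I_def)
qed


end
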